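(* Let $G$ be a Lie group, $\mathfrak s\subset\mathfrak g$ a vector subspace, $\varphi:G\to GL(N,\mathbb R)$ a Lie group homomorphism, let $G$ act on $\mathbb R^N\setminus\{0\}$ by $g\cdot x=\varphi(g)x$, and let $\nabla$ be the standard flat affine connection on $\mathbb R^N\setminus\{0\}$. Then for both signs, \[\rho^{\pm}_{G,\mathfrak s}(\mathbb R^N\setminus\{0\},\varphi,\nabla)\le\rho_{G,\mathfrak s}(\mathbb R^N\setminus\{0\},\varphi).\]
   Context: The standard flat connection: $\nabla_X\big(\sum_k f_k\partial/\partial x_k\big)=\sum_k(Xf_k)\partial/\partial x_k$. For $A\in\mathfrak g$, $X_A(p):=(d\sigma_p)_e(A)$ is the fundamental vector field, $\sigma_p(g)=\sigma(g,p)$; $\nabla X$ is the endomorphism $Y\mapsto\nabla_YX$, and $\nabla^M\mathfrak s:=\{\nabla X_A\mid A\in\mathfrak s\}$. $Cl^+_n:=Cl_n$ is the unital real algebra generated by $e_1,\dots,e_n$ with $e_ie_j+e_je_i=-2\delta_{ij}$, and $Cl^-_n:=Cl_{0,n}$ the one with $e_ie_j+e_je_i=2\delta_{ij}$. $\rho^\epsilon_{G,\mathfrak s}(M,\sigma,\nabla)$ is the largest $n$ for which there is a unital $\mathbb R$-algebra homomorphism $f:Cl^\epsilon_n\to\mathrm{End}_{C^\infty(M)}(\mathfrak X(M))$ with $f(e_i)\in\nabla^M\mathfrak s$ for all $i$. $\rho_{G,\mathfrak s}(M,\sigma)$ is the largest $n$ such that there exist $n$ fundamental vector fields $X_{A_1},\dots,X_{A_n}$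 with $A_i\in\mathfrak s$ that are linearly independent at every point of $M$. *)

theory Defs
  imports "HOL-Analysis.Analysis"
begin

text \<open>Vector fields on (an open subset of) R^N are represented as maps real^'n => real^'n.
  The manifold is M = R^N minus the origin.\<close>

type_synonym ('n) vf = "real^('n::finite) \<Rightarrow> real^'n"

definition punctured :: "(real^'n::finite) set" where
  "punctured = - {0}"

text \<open>Fundamental vector field of A for the linear action g.x = phi(g) x, where
  dphi = (d phi)_e is the differential of phi at the identity:
  X_A(p) = (d sigma_p)_e(A) = dphi(A) p.\<close>
definition fund_vf :: "('g \<Rightarrow> real^('n::finite)^'n) \<Rightarrow> 'g \<Rightarrow> 'n vf" where
  "fund_vf dphi A = (\<lambda>p. dphi A *v p)"

text \<open>Standard flat connection: nabla_Y X (p) = (DX)_p (Y p), i.e. sum_k (Y f_k) d/dx_k.\<close>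
definition flat_nabla :: "('n::finite) vf \<Rightarrow> 'n vf \<Rightarrow> 'n vf" where
  "flat_nabla Y X = (\<lambda>p. frechet_derivative X (at p) (Y p))"

definition nabla_end :: "('n::finite) vf \<Rightarrow> ('n vf \<Rightarrow> 'n vf)" where
  "nabla_end X = (\<lambda>Y. flat_nabla Y X)"

definition nablaM :: "('g \<Rightarrow> real^('n::finite)^'n) \<Rightarrow> 'g set \<Rightarrow> ('n vf \<Rightarrow> 'n vf) set" where
  "nablaM dphi s = {nabla_end (fund_vf dphi A) | A. A \<in> s}"

text \<open>A unital algebra homomorphism Cl^eps_n -> End(X(M)) is the same as an assignment
  of the generators e_i to endomorphisms T_i satisfying the defining relations of Cl^eps_n
  (universal property of the presentation).  eps = 1 encodes Cl^+_n (e_i e_j + e_j e_i = -2 delta_ij),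
  eps = -1 encodes Cl^-_n (e_i e_j + e_j e_i = 2 delta_ij).\<close>
definition clifford_rep :: "real \<Rightarrow> nat \<Rightarrow> (nat \<Rightarrow> (('n::finite) vf \<Rightarrow> 'n vf)) \<Rightarrow> bool" where
  "clifford_rep eps n T \<longleftrightarrow>
     (\<forall>i<n. \<forall>j<n. \<forall>Y. \<forall>p\<in>(punctured :: (real^'n) set).
        T i (T j Y) p + T j (T i Y) p = (if i = j then -2 * eps else 0) *\<^sub>R Y p)"

definition rho_pm :: "real \<Rightarrow> ('g \<Rightarrow> real^('n::finite)^'n) \<Rightarrow> 'g set \<Rightarrow> nat" where
  "rho_pm eps dphi s = (GREATEST n. \<exists>T. (\<forall>i<n. T i \<in> nablaM dphi s) \<and> clifford_rep eps n T)"

definition rho :: "('g \<Rightarrow> real^('n::finite)^'n) \<Rightarrow> 'g set \<Rightarrow> nat" where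
  "rho dphi s = (GREATEST n. \<exists>A. (\<forall>i<n. A i \<in> s) \<and>
     (\<forall>p\<in>(punctured :: (real^'n) set).
        inj_on (\<lambda>i. fund_vf dphi (A i) p) {..<n} \<and>
        independent ((\<lambda>i. fund_vf dphi (A i) p) ` {..<n})))"

end

theory Submission
  imports Defs
begin

lemma nabla_fund:
  "nabla_end (fund_vf dphi B) Y = (\<lambda>p. dphi B *v Y p)"
proof -
  have "\<And>p. frechet_derivative (\<lambda>q. dphi B *v q) (at p) = (\<lambda>v. dphi B *v v)"
    by (metis frechet_derivative_at bounded_linear_imp_has_derivative
        matrix_vector_mul_bounded_linear)
  then show ?thesis
    unfolding nabla_end_def flat_nabla_def fund_vf_def by simp
qed

lemma indep_core:
  fixes M :: "nat \<Rightarrow> real^'n^'n" and p :: "real^'n"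
  assumes rel: "\<And>i j v. i < n \<Longrightarrow> j < n \<Longrightarrow>
     M i *v (M j *v v) + M j *v (M i *v v) = (if i = j then -2 * eps else 0) *\<^sub>R v"
    and eps: "eps \<noteq> 0" and p: "p \<noteq> 0"
    and sum0: "(\<Sum>i<n. c i *\<^sub>R (M i *v p)) = 0"
  shows "\<forall>i<n. c i = 0"
proof -
  define X where "X j i = (c j * c i) *\<^sub>R (M j *v (M i *v p))" for j i
  have lin: "\<And>j. linear (\<lambda>x. M j *v x)" by (simp add: matrix_vector_mul_linear)
  have "(\<Sum>j<n. c j *\<^sub>R (M j *v (\<Sum>i<n. c i *\<^sub>R (M i *v p)))) = 0"
    using sum0 by simp
  moreover have "\<And>j. M j *v (\<Sum>i<n. c i *\<^sub>R (M i *v p)) = (\<Sum>i<n. c i *\<^sub>R (M j *v (M i *v p)))"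
    using lin by (simp add: linear_sum linear_scale)
  ultimately have S0: "(\<Sum>j<n. \<Sum>i<n. X j i) = 0"
    by (simp add: X_def scaleR_sum_right mult.commute)
  have S1: "(\<Sum>j<n. \<Sum>i<n. X i j) = 0"
    using S0 sum.swap[of X "{..<n}" "{..<n}"] by simp
  have "(\<Sum>j<n. \<Sum>i<n. X j i + X i j) = (\<Sum>j<n. \<Sum>i<n. (if i = j then (c j * c j * (-2 * eps)) *\<^sub>R p else 0))"
  proof (rule sum.cong[OF refl], rule sum.cong[OF refl])
    fix j i assume "j \<in> {..<n}" "i \<in> {..<n}"
    then have "X j i + X i j = (c j * c i) *\<^sub>R (M j *v (M i *v p) + M i *v (M j *v p))"
      by (simp add: X_def scaleR_add_right mult.commute)
    also have "\<dots> = (if i = j then (c j * c j * (-2 * eps)) *\<^sub>R p else 0)"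
      using rel[of j i p] \<open>j \<in> {..<n}\<close> \<open>i \<in> {..<n}\<close> by auto
    finally show "X j i + X i j = (if i = j then (c j * c j * (-2 * eps)) *\<^sub>R p else 0)" .
  qed
  also have "\<dots> = (\<Sum>j<n. (c j * c j * (-2 * eps)) *\<^sub>R p)"
    by (simp add: sum.delta)
  also have "\<dots> = ((-2 * eps) * (\<Sum>j<n. c j * c j)) *\<^sub>R p"
    by (simp add: sum_distrib_left scaleR_sum_left ac_simps)
  finally have "((-2 * eps) * (\<Sum>j<n. c j * c j)) *\<^sub>R p = 0"
    using S0 S1 by (simp add: sum.distrib)
  then have "(\<Sum>j<n. c j * c j) = 0" using eps p by simp
  then have "\<forall>j\<in>{..<n}. c j * c j = 0"
    by (subst sum_nonneg_eq_0_iff[symmetric]) auto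
  then show ?thesis by auto
qed

lemma pm_imp_rho:
  fixes dphi :: "'g::euclidean_space \<Rightarrow> real^'n^'n"
  assumes eps: "eps \<noteq> 0"
    and T: "\<forall>i<n. T i \<in> nablaM dphi s" and cl: "clifford_rep eps n T"
  shows "\<exists>A. (\<forall>i<n. A i \<in> s) \<and>
     (\<forall>p\<in>(punctured :: (real^'n) set).
        inj_on (\<lambda>i. fund_vf dphi (A i) p) {..<n} \<and>
        independent ((\<lambda>i. fund_vf dphi (A i) p) ` {..<n}))"
proof -
  have "\<forall>i<n. \<exists>B. B \<in> s \<and> T i = nabla_end (fund_vf dphi B)"
    using T unfolding nablaM_def by blast
  then obtain A where A: "\<And>i. i < n \<Longrightarrow> A i \<in> s \<and> T i = nabla_end (fund_vf dphi (A i))"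
    by metis
  define M where "M i = dphi (A i)" for i
  have Tv: "\<And>i Y. i < n \<Longrightarrow> T i Y = (\<lambda>p. M i *v Y p)"
    using A by (simp add: nabla_fund M_def)
  have one: "(1::real^'n) \<in> punctured"
    by (simp add: punctured_def vec_eq_iff)
  have rel: "\<And>i j v. i < n \<Longrightarrow> j < n \<Longrightarrow>
     M i *v (M j *v v) + M j *v (M i *v v) = (if i = j then -2 * eps else 0) *\<^sub>R v"
  proof -
    fix i j v assume ij: "i < n" "j < n"
    have "T i (T j (\<lambda>_. v)) 1 + T j (T i (\<lambda>_. v)) 1 = (if i = j then -2 * eps else 0) *\<^sub>R v"
      using cl one ij unfolding clifford_rep_def by blast
    then show "M i *v (M j *v v) + M j *v (M i *v v) = (if i = j then -2 * eps else 0) *\<^sub>R v"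
      using ij by (simp add: Tv)
  qed
  have fv: "\<And>i p. fund_vf dphi (A i) p = M i *v p" by (simp add: fund_vf_def M_def)
  have core: "\<And>p c. p \<noteq> 0 \<Longrightarrow> (\<Sum>i<n. c i *\<^sub>R (M i *v p)) = 0 \<Longrightarrow> \<forall>i<n. c i = 0"
    using indep_core[OF rel eps] by blast
  show ?thesis
  proof (intro exI conjI allI impI ballI)
    show "\<And>i. i < n \<Longrightarrow> A i \<in> s" using A by blast
    fix p :: "real^'n" assume "p \<in> punctured"
    then have p: "p \<noteq> 0" by (simp add: punctured_def)
    show inj: "inj_on (\<lambda>i. fund_vf dphi (A i) p) {..<n}"
    proof (rule inj_onI, rule ccontr)
      fix i j assume i: "i \<in> {..<n}" and j: "j \<in> {..<n}" and eq: "fund_vf dphi (A i) p = fund_vf dphi (A j) p"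
        and ne: "i \<noteq> j"
      define c where "c k = (if k = i then 1 else 0) - (if k = j then 1 else (0::real))" for k
      have "(\<Sum>k<n. c k *\<^sub>R (M k *v p)) = (\<Sum>k<n. (if k = i then M k *v p else 0)) - (\<Sum>k<n. (if k = j then M k *v p else 0))"
        unfolding sum_subtractf[symmetric] by (rule sum.cong) (auto simp: c_def)
      also have "\<dots> = M i *v p - M j *v p" using i j by (simp add: sum.delta)
      also have "\<dots> = 0" using eq by (simp add: fv)
      finally have "\<forall>k<n. c k = 0" using core p by blast
      then show False using i ne by (auto simp: c_def)
    qed
    show "independent ((\<lambda>i. fund_vf dphi (A i) p) ` {..<n})"
    proof (rule independent_if_scalars_zero)
      show "finite ((\<lambda>i. fund_vf dphi (A i) p) ` {..<n})" by simp
      fix f x assume s0: "(\<Sum>x\<in>(\<lambda>i. fund_vf dphi (A i) p) ` {..<n}. f x *\<^sub>R x) = 0"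
        and x: "x \<in> (\<lambda>i. fund_vf dphi (A i) p) ` {..<n}"
      have "(\<Sum>i<n. f (M i *v p) *\<^sub>R (M i *v p)) = 0"
        using s0 sum.reindex[OF inj, of "\<lambda>x. f x *\<^sub>R x"] by (simp add: fv)
      then have "\<forall>i<n. f (M i *v p) = 0" using core[OF p, of "\<lambda>i. f (M i *v p)"] by blast
      then show "f x = 0" using x by (auto simp: fv)
    qed
  qed
qed

lemma rho_bound:
  fixes dphi :: "'g::euclidean_space \<Rightarrow> real^'n^'n"
  assumes "\<forall>p\<in>(punctured :: (real^'n) set).
        inj_on (\<lambda>i. fund_vf dphi (A i) p) {..<n} \<and>
        independent ((\<lambda>i. fund_vf dphi (A i) p) ` {..<n})"
  shows "n \<le> CARD('n)"
proof -
  have one: "(1::real^'n) \<in> punctured"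
    by (simp add: punctured_def vec_eq_iff)
  then have "inj_on (\<lambda>i. fund_vf dphi (A i) 1) {..<n}"
    and "independent ((\<lambda>i. fund_vf dphi (A i) (1::real^'n)) ` {..<n})" using assms by auto
  then show ?thesis using independent_bound card_image by fastforce
qed

lemma main:
  fixes dphi :: "'g::euclidean_space \<Rightarrow> real^'n^'n"
  assumes eps: "eps \<noteq> 0" and s: "subspace s"
  shows "rho_pm eps dphi s \<le> rho dphi s"
proof -
  let ?P = "\<lambda>n. \<exists>T. (\<forall>i<n. T i \<in> nablaM dphi s) \<and> clifford_rep eps n T"
  let ?R = "\<lambda>n. \<exists>A. (\<forall>i<n. A i \<in> s) \<and>
     (\<forall>p\<in>(punctured :: (real^'n) set).
        inj_on (\<lambda>i. fund_vf dphi (A i) p) {..<n} \<and>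
        independent ((\<lambda>i. fund_vf dphi (A i) p) ` {..<n}))"
  have PR: "\<And>n. ?P n \<Longrightarrow> ?R n" using pm_imp_rho[OF eps] by blast
  have Rb: "\<And>n. ?R n \<Longrightarrow> n \<le> CARD('n)" using rho_bound by blast
  have P0: "?P 0" by (auto simp: clifford_rep_def)
  have "?P (Greatest ?P)"
    by (rule GreatestI_nat[where P="?P", OF P0]) (use PR Rb in blast)
  then have "?R (Greatest ?P)" by (rule PR)
  then have "Greatest ?P \<le> Greatest ?R"
    by (rule Greatest_le_nat[where P="?R"]) (use Rb in blast)
  then show ?thesis unfolding rho_pm_def rho_def .
qed

theorem corollary4p7:
  fixes dphi :: "'g::euclidean_space \<Rightarrow> real^'n^'n" and s :: "'g set"
  assumes "linear dphi" and "subspace s"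
  shows "rho_pm 1 dphi s \<le> rho dphi s \<and> rho_pm (-1) dphi s \<le> rho dphi s"
  using main[OF _ assms(2), of 1 dphi] main[OF _ assms(2), of "-1" dphi] by simp

end
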